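(* For every real rational function $R\not\equiv0$, $$\operatorname{Ind}_{\mathbb{P}\mathbb{R}}\Big(-\frac1R\Big)=\operatorname{Ind}_{\mathbb{P}\mathbb{R}}(R).$$
   Context: For a real rational function $R$ and a real pole $\omega_0$ of $R$ of odd order, $\operatorname{Ind}_{\omega_0}(R)=+1$ if $R(\omega_0-0)<0<R(\omega_0+0)$ and $-1$ if $R(\omega_0-0)>0>R(\omega_0+0)$; $\operatorname{Ind}_{-\infty}^{+\infty}(R)$ is the sum of these over all real poles of $R$ of odd order. Writing $R=f_1/f_0$, $R$ has a pole at $\infty$ of order $\deg f_1-\deg f_0$ when this is positive; if this order is odd, $\operatorname{Ind}_\infty(R)=+1$ if $R(+\infty)<0<R(-\infty)$ and $-1$ if $R(+\infty)>0>R(-\infty)$; otherwise $\operatorname{Ind}_\infty(R)=0$. Then $\operatorname{Ind}_{\mathbb{P}\mathbb{R}}(R)=\operatorname{Ind}_{-\infty}^{+\infty}(R)+\operatorname{Ind}_\infty(R)$. *)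

theory Defs
  imports "HOL-Computational_Algebra.Polynomial"
begin

text \<open>A real rational function R is represented by a pair of real polynomials
  (f1, f0) with f0 \<noteq> 0, R = f1/f0.  All notions below depend only on R.\<close>

definition ratfun :: "real poly \<Rightarrow> real poly \<Rightarrow> real \<Rightarrow> real" where
  "ratfun f1 f0 x = poly f1 x / poly f0 x"

definition pole_order :: "real poly \<Rightarrow> real poly \<Rightarrow> real \<Rightarrow> int" where
  "pole_order f1 f0 w = int (order w f0) - int (order w f1)"

definition jump_at :: "real poly \<Rightarrow> real poly \<Rightarrow> real \<Rightarrow> int" where
  "jump_at f1 f0 w =
     (if pole_order f1 f0 w > 0 \<and> odd (pole_order f1 f0 w) then
        (if (\<forall>\<^sub>F x in at_left w. ratfun f1 f0 x < 0) \<and> (\<forall>\<^sub>F x in at_right w. ratfun f1 f0 x > 0) then 1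
         else if (\<forall>\<^sub>F x in at_left w. ratfun f1 f0 x > 0) \<and> (\<forall>\<^sub>F x in at_right w. ratfun f1 f0 x < 0) then -1
         else 0)
      else 0)"

text \<open>Ind_{-inf}^{+inf}: sum over the real poles of odd order (all poles are roots of f0).\<close>
definition ind_real :: "real poly \<Rightarrow> real poly \<Rightarrow> int" where
  "ind_real f1 f0 = (\<Sum>w\<in>{w. poly f0 w = 0}. jump_at f1 f0 w)"

definition ind_inf :: "real poly \<Rightarrow> real poly \<Rightarrow> int" where
  "ind_inf f1 f0 =
     (let k = int (degree f1) - int (degree f0) in
      if k > 0 \<and> odd k then
        (if (\<forall>\<^sub>F x in at_top. ratfun f1 f0 x < 0) \<and> (\<forall>\<^sub>F x in at_bot. ratfun f1 f0 x > 0) then 1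
         else if (\<forall>\<^sub>F x in at_top. ratfun f1 f0 x > 0) \<and> (\<forall>\<^sub>F x in at_bot. ratfun f1 f0 x < 0) then -1
         else 0)
      else 0)"

definition ind_PR :: "real poly \<Rightarrow> real poly \<Rightarrow> int" where
  "ind_PR f1 f0 = ind_real f1 f0 + ind_inf f1 f0"

end

theory Submission imports Defs begin

definition sR :: "real poly \<Rightarrow> real \<Rightarrow> real" where
  "sR p w = sgn (poly (p div [:-w,1:]^order w p) w)"
definition sL :: "real poly \<Rightarrow> real \<Rightarrow> real" where
  "sL p w = (-1)^order w p * sR p w"

lemma lt_ex_helper: "(w::real) - 1 < w" by simp

lemma side_signs:
  fixes p :: "real poly"
  assumes "p \<noteq> 0"
  shows "(\<forall>\<^sub>F x in at_right w. sgn (poly p x) = sR p w) \<and>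
         (\<forall>\<^sub>F x in at_left w. sgn (poly p x) = sL p w) \<and> (sR p w = 1 \<or> sR p w = -1)"
proof -
  define m where "m = order w p"
  obtain q where q: "p = [:-w,1:]^m * q" and nd: "\<not> [:-w,1:] dvd q"
    using order_decomp[OF assms, of w] unfolding m_def by blast
  have qw: "poly q w \<noteq> 0" using nd by (simp add: poly_eq_0_iff_dvd)
  have qdef: "p div [:-w,1:]^m = q" using q by simp
  have sRq: "sR p w = sgn (poly q w)" unfolding sR_def m_def[symmetric] qdef ..
  have px: "\<And>x. poly p x = (x - w)^m * poly q x" using q by (simp add: poly_power)
  have ev: "\<forall>\<^sub>F x in at w. sgn (poly q x) = sgn (poly q w)"
  proof -
    have t: "((\<lambda>x. poly q x) \<longlongrightarrow> poly q w) (at w)"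
      by (intro tendsto_intros)
    show ?thesis
    proof (cases "poly q w > 0")
      case True
      from order_tendstoD(1)[OF t True] show ?thesis
        by (rule eventually_mono) (use True in auto)
    next
      case False
      with qw have "poly q w < 0" by auto
      from order_tendstoD(2)[OF t this] show ?thesis
        by (rule eventually_mono) (use \<open>poly q w < 0\<close> in auto)
    qed
  qed
  have evR: "\<forall>\<^sub>F x in at_right w. sgn (poly q x) = sgn (poly q w)"
    and evL: "\<forall>\<^sub>F x in at_left w. sgn (poly q x) = sgn (poly q w)"
    using ev by (auto simp: eventually_at_split)
  have "\<forall>\<^sub>F x in at_right w. sgn (poly p x) = sR p w"
    using evR eventually_at_right_less[of w]
  proof eventually_elim
    case (elim x)
    then show ?case by (simp add: px sRq sgn_mult power_sgn)
  qed
  moreover have "\<forall>\<^sub>F x in at_left w. sgn (poly p x) = sL p w"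
    using evL eventually_at_left_real[of "w - 1" w, OF lt_ex_helper]
  proof eventually_elim
    case (elim x)
    then show ?case by (simp add: px sRq sgn_mult power_sgn sL_def m_def[symmetric])
  qed
  moreover have "sR p w = 1 \<or> sR p w = -1" using qw by (auto simp: sRq sgn_if)
  ultimately show ?thesis by blast
qed

lemma const_sign:
  fixes p :: "real poly"
  assumes "u \<le> v" "\<forall>x\<in>{u..v}. poly p x \<noteq> 0"
  shows "sgn (poly p u) = sgn (poly p v)"
proof (rule ccontr)
  assume ne: "sgn (poly p u) \<noteq> sgn (poly p v)"
  have pu: "poly p u \<noteq> 0" and pv: "poly p v \<noteq> 0" using assms by auto
  have "u \<noteq> v" using ne by auto
  with assms have uv: "u < v" by auto
  have "poly p u * poly p v < 0" using ne pu pv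
    by (auto simp: sgn_if mult_less_0_iff split: if_splits)
  from poly_IVT[OF uv this] obtain x where "u < x" "x < v" "poly p x = 0" by auto
  with assms show False by auto
qed

lemma ev_unique:
  assumes "F \<noteq> bot" "eventually (\<lambda>x. g x = c) F" "eventually (\<lambda>x. g x = d) F"
  shows "c = d"
proof -
  from eventually_happens'[OF assms(1) eventually_conj[OF assms(2,3)]] show ?thesis by auto
qed

lemma telescope:
  fixes p :: "real poly"
  assumes "p \<noteq> 0"
  shows "a < b \<Longrightarrow> poly p a \<noteq> 0 \<Longrightarrow> poly p b \<noteq> 0 \<Longrightarrow>
    (\<Sum>w\<in>{w. poly p w = 0 \<and> a < w \<and> w < b}. sR p w - sL p w) = sgn (poly p b) - sgn (poly p a)"
proof (induction "card {w. poly p w = 0 \<and> a < w \<and> w < b}" arbitrary: a rule: less_induct)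
  case (less a)
  define S where "S = {w. poly p w = 0 \<and> a < w \<and> w < b}"
  have finS: "finite S" unfolding S_def
    by (rule finite_subset[OF _ poly_roots_finite[OF assms]]) auto
  show ?case
  proof (cases "S = {}")
    case True
    have "sgn (poly p a) = sgn (poly p b)"
      using True less.prems by (intro const_sign) (auto simp: S_def, (metis less_eq_real_def)+)
    then show ?thesis using True by (simp add: S_def[symmetric])
  next
    case False
    define w where "w = Min S"
    have wS: "w \<in> S" using False finS by (simp add: w_def)
    have wmin: "\<And>y. y \<in> S \<Longrightarrow> w \<le> y" using finS by (simp add: w_def)
    have aw: "a < w" and wb: "w < b" and pw: "poly p w = 0" using wS by (auto simp: S_def)
    define T where "T = {y\<in>S. w < y}"
    have finT: "finite T" using finS by (simp add: T_def)
    define c0 where "c0 = (if T = {} then b else Min T)"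
    have Tprop: "\<And>y. y \<in> T \<Longrightarrow> w < y \<and> y < b" by (auto simp: T_def S_def)
    have wc0: "w < c0" and c0b: "c0 \<le> b"
    proof -
      show "w < c0"
      proof (cases "T = {}")
        case False
        then have "Min T \<in> T" using finT by simp
        then show ?thesis using False Tprop by (simp add: c0_def)
      qed (use wb in \<open>simp add: c0_def\<close>)
      show "c0 \<le> b"
      proof (cases "T = {}")
        case False
        then have "Min T \<in> T" using finT by simp
        then show ?thesis using False Tprop[of "Min T"] by (simp add: c0_def)
      qed (simp add: c0_def)
    qed
    have noroot: "\<And>y. w < y \<Longrightarrow> y < c0 \<Longrightarrow> poly p y \<noteq> 0"
    proof
      fix y assume y: "w < y" "y < c0" "poly p y = 0"
      then have "y \<in> T" using aw c0b by (auto simp: T_def S_def)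
      then have "c0 \<le> y" using finT by (auto simp: c0_def)
      with y show False by auto
    qed
    define c where "c = (w + c0) / 2"
    have wc: "w < c" and cc0: "c < c0" using wc0 by (auto simp: c_def)
    have pc: "poly p c \<noteq> 0" using noroot wc cc0 by auto
    have left_root: "\<And>y. a \<le> y \<Longrightarrow> y < w \<Longrightarrow> poly p y \<noteq> 0"
    proof
      fix y assume y: "a \<le> y" "y < w" "poly p y = 0"
      have "a \<noteq> y" using y less.prems by auto
      then have "y \<in> S" using y wb by (auto simp: S_def)
      then show False using wmin y by force
    qed
    have sLw: "sL p w = sgn (poly p a)"
    proof -
      have "\<forall>\<^sub>F x in at_left w. sgn (poly p x) = sgn (poly p a)"
        using eventually_at_left_real[OF aw]
      proof eventually_elim
        case (elim x)
        then show ?case using left_root by (intro const_sign[symmetric]) auto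
      qed
      with side_signs[OF assms, of w] show ?thesis
        using ev_unique[where F="at_left w" and g="\<lambda>x. sgn (poly p x)", OF trivial_limit_at_left_real] by blast
    qed
    have sRw: "sR p w = sgn (poly p c)"
    proof -
      have "\<forall>\<^sub>F x in at_right w. sgn (poly p x) = sgn (poly p c)"
        using eventually_at_right_real[OF wc]
      proof eventually_elim
        case (elim x)
        then show ?case using noroot cc0 by (intro const_sign) auto
      qed
      with side_signs[OF assms, of w] show ?thesis
        using ev_unique[where F="at_right w" and g="\<lambda>x. sgn (poly p x)", OF trivial_limit_at_right_real] by blast
    qed
    have S': "{y. poly p y = 0 \<and> c < y \<and> y < b} = S - {w}"
    proof (intro equalityI subsetI)
      fix y assume "y \<in> {y. poly p y = 0 \<and> c < y \<and> y < b}"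
      then show "y \<in> S - {w}" using aw wc by (auto simp: S_def)
    next
      fix y assume y: "y \<in> S - {w}"
      then have "w < y" using wmin[of y] by auto
      then have "y \<in> T" using y by (auto simp: T_def)
      then have "c0 \<le> y" using finT by (auto simp: c0_def)
      then show "y \<in> {y. poly p y = 0 \<and> c < y \<and> y < b}" using y cc0 by (auto simp: S_def)
    qed
    have "card (S - {w}) < card S" using finS wS by (meson card_Diff1_less)
    then have IH: "(\<Sum>y\<in>S - {w}. sR p y - sL p y) = sgn (poly p b) - sgn (poly p c)"
      using less.hyps[of c] S' wc0 c0b cc0 pc less.prems by (auto simp: S_def)
    have "(\<Sum>y\<in>S. sR p y - sL p y) = (sR p w - sL p w) + (\<Sum>y\<in>S - {w}. sR p y - sL p y)"
      using finS wS by (simp add: sum.remove)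
    then show ?thesis using IH sLw sRw by (simp add: S_def)
  qed
qed

lemma top_sign:
  fixes p :: "real poly"
  assumes "p \<noteq> 0"
  shows "\<exists>M. \<forall>x\<ge>M. sgn (poly p x) = sgn (lead_coeff p)"
proof (cases "lead_coeff p > 0")
  case True
  from poly_pinfty_gt_lc[OF True] obtain n where "\<forall>x\<ge>n. poly p x \<ge> lead_coeff p" by auto
  then show ?thesis using True by (intro exI[of _ n]) auto
next
  case False
  then have lc: "lead_coeff p < 0" using assms by (simp add: less_le)
  then have "lead_coeff (-p) > 0" by simp
  from poly_pinfty_gt_lc[OF this] obtain n where "\<forall>x\<ge>n. poly (-p) x \<ge> lead_coeff (-p)" by auto
  then show ?thesis using lc by (intro exI[of _ n]) auto
qed

lemma bot_sign:
  fixes p :: "real poly"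
  assumes "p \<noteq> 0"
  shows "\<exists>M. \<forall>x\<le>M. sgn (poly p x) = (-1)^degree p * sgn (lead_coeff p)"
proof -
  define r where "r = p \<circ>\<^sub>p [:0,-1:]"
  have lcr: "lead_coeff r = lead_coeff p * (-1)^degree p"
    unfolding r_def by (subst lead_coeff_comp) auto
  have "r \<noteq> 0" using assms lcr by auto
  from top_sign[OF this] obtain M where M: "\<forall>x\<ge>M. sgn (poly r x) = sgn (lead_coeff r)" by auto
  have pr: "\<And>x. poly r x = poly p (-x)" by (simp add: r_def poly_pcompose)
  show ?thesis
  proof (intro exI[of _ "-M"] allI impI)
    fix x :: real assume "x \<le> -M"
    then have "-x \<ge> M" by simp
    with M have "sgn (poly r (-x)) = sgn (lead_coeff r)" by blast
    then show "sgn (poly p x) = (-1)^degree p * sgn (lead_coeff p)"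
      by (simp add: pr lcr sgn_mult power_sgn)
  qed
qed

lemma sign_filter:
  fixes g :: "real \<Rightarrow> real"
  assumes "F \<noteq> bot" "eventually (\<lambda>x. sgn (g x) = s) F" "s = 1 \<or> s = -1"
  shows "((\<forall>\<^sub>F x in F. g x < 0) \<longleftrightarrow> s = -1) \<and> ((\<forall>\<^sub>F x in F. g x > 0) \<longleftrightarrow> s = 1)"
proof -
  have neg: "eventually (\<lambda>x. g x < 0) F" if "s = -1"
    using assms(2) by (rule eventually_mono) (use that in \<open>auto simp: sgn_if split: if_splits\<close>)
  have pos: "eventually (\<lambda>x. g x > 0) F" if "s = 1"
    using assms(2) by (rule eventually_mono) (use that in \<open>auto simp: sgn_if split: if_splits\<close>)
  have "\<not> (eventually (\<lambda>x. g x < 0) F \<and> eventually (\<lambda>x. g x > 0) F)"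
  proof
    assume "eventually (\<lambda>x. g x < 0) F \<and> eventually (\<lambda>x. g x > 0) F"
    then have "eventually (\<lambda>x. g x < 0 \<and> g x > 0) F" by (simp add: eventually_conj)
    from eventually_happens'[OF assms(1) this] show False by auto
  qed
  then show ?thesis using neg pos assms(3) by auto
qed

lemma ratfun_sgn:
  assumes "eventually (\<lambda>x. sgn (poly (f1 * f0) x) = s) F" "s = 1 \<or> s = -1"
  shows "eventually (\<lambda>x. sgn (ratfun f1 f0 x) = s) F \<and> eventually (\<lambda>x. sgn (ratfun (-f0) f1 x) = -s) F"
proof -
  have *: "sgn (ratfun f1 f0 x) = s \<and> sgn (ratfun (-f0) f1 x) = -s" if "sgn (poly (f1 * f0) x) = s" for x
  proof -
    have "poly f1 x \<noteq> 0" "poly f0 x \<noteq> 0" using that assms(2) by auto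
    then show ?thesis using that assms(2)
      by (auto simp: ratfun_def sgn_if divide_less_0_iff zero_less_divide_iff mult_less_0_iff zero_less_mult_iff
               split: if_splits)
  qed
  show ?thesis
    using eventually_mono[OF assms(1) *] by (simp add: eventually_conj_iff)
qed

lemma jump_diff:
  fixes f1 f0 :: "real poly"
  assumes "f0 \<noteq> 0" "f1 \<noteq> 0"
  shows "real_of_int (jump_at f1 f0 w) - real_of_int (jump_at (-f0) f1 w)
         = (sR (f1*f0) w - sL (f1*f0) w) / 2"
proof -
  define p where "p = f1 * f0"
  have p0: "p \<noteq> 0" using assms by (simp add: p_def)
  note ss = side_signs[OF p0, of w]
  define r where "r = sR p w"
  define l where "l = sL p w"
  define m where "m = order w p"
  have m: "m = order w f1 + order w f0" using p0 unfolding m_def p_def by (simp add: order_mult)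
  have r: "r = 1 \<or> r = -1" using ss by (simp add: r_def)
  have lr: "l = (-1)^m * r" by (simp add: l_def r_def sL_def m_def)
  have l: "l = 1 \<or> l = -1" using r lr by (cases "even m") auto
  have R1: "((\<forall>\<^sub>F x in at_right w. ratfun f1 f0 x < 0) \<longleftrightarrow> r = -1) \<and> ((\<forall>\<^sub>F x in at_right w. ratfun f1 f0 x > 0) \<longleftrightarrow> r = 1)"
    using ratfun_sgn[of f1 f0 r "at_right w"] ss r
    by (intro sign_filter[OF trivial_limit_at_right_real]) (auto simp: p_def r_def)
  have R2: "((\<forall>\<^sub>F x in at_right w. ratfun (-f0) f1 x < 0) \<longleftrightarrow> -r = -1) \<and> ((\<forall>\<^sub>F x in at_right w. ratfun (-f0) f1 x > 0) \<longleftrightarrow> -r = 1)"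
    using ratfun_sgn[of f1 f0 r "at_right w"] ss r
    by (intro sign_filter[OF trivial_limit_at_right_real]) (auto simp: p_def r_def)
  have L1: "((\<forall>\<^sub>F x in at_left w. ratfun f1 f0 x < 0) \<longleftrightarrow> l = -1) \<and> ((\<forall>\<^sub>F x in at_left w. ratfun f1 f0 x > 0) \<longleftrightarrow> l = 1)"
    using ratfun_sgn[of f1 f0 l "at_left w"] ss l
    by (intro sign_filter[OF trivial_limit_at_left_real]) (auto simp: p_def l_def)
  have L2: "((\<forall>\<^sub>F x in at_left w. ratfun (-f0) f1 x < 0) \<longleftrightarrow> -l = -1) \<and> ((\<forall>\<^sub>F x in at_left w. ratfun (-f0) f1 x > 0) \<longleftrightarrow> -l = 1)"
    using ratfun_sgn[of f1 f0 l "at_left w"] ss l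
    by (intro sign_filter[OF trivial_limit_at_left_real]) (auto simp: p_def l_def)
  define d where "d = int (order w f0) - int (order w f1)"
  have po1: "pole_order f1 f0 w = d" by (simp add: pole_order_def d_def)
  have po2: "pole_order (-f0) f1 w = -d" by (simp add: pole_order_def d_def order_uminus)
  have par: "odd d \<longleftrightarrow> odd m" unfolding d_def m by (simp add: even_diff) blast
  have J1: "jump_at f1 f0 w = (if d > 0 \<and> odd d then (if l = -1 \<and> r = 1 then 1 else if l = 1 \<and> r = -1 then -1 else 0) else 0)"
    unfolding jump_at_def po1 using R1 L1 by simp
  have J2: "jump_at (-f0) f1 w = (if -d > 0 \<and> odd (-d) then (if -l = -1 \<and> -r = 1 then 1 else if -l = 1 \<and> -r = -1 then -1 else 0) else 0)"
    unfolding jump_at_def po2 using R2 L2 by simp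
  show ?thesis
  proof (cases "odd m")
    case True
    then have "l = - r" using lr by simp
    moreover have "d \<noteq> 0" using True par by auto
    ultimately show ?thesis using r J1 J2 True par
      by (auto simp: p_def[symmetric] r_def[symmetric] l_def[symmetric])
  next
    case False
    then have "l = r" using lr by simp
    then show ?thesis using r J1 J2 False par
      by (auto simp: p_def[symmetric] r_def[symmetric] l_def[symmetric])
  qed
qed

lemma inf_diff:
  fixes f1 f0 :: "real poly"
  assumes "f0 \<noteq> 0" "f1 \<noteq> 0"
  shows "real_of_int (ind_inf f1 f0) - real_of_int (ind_inf (-f0) f1)
         = ((-1)^degree (f1*f0) * sgn (lead_coeff (f1*f0)) - sgn (lead_coeff (f1*f0))) / 2"
proof -
  define p where "p = f1 * f0"
  have p0: "p \<noteq> 0" using assms by (simp add: p_def)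
  define t where "t = sgn (lead_coeff p)"
  define n where "n = degree p"
  define b where "b = (-1)^n * t"
  have t: "t = 1 \<or> t = -1" using p0 by (auto simp: t_def sgn_if)
  have b: "b = 1 \<or> b = -1" using t by (cases "even n") (auto simp: b_def)
  have n: "n = degree f1 + degree f0" using assms by (simp add: n_def p_def degree_mult_eq)
  have et: "\<forall>\<^sub>F x in at_top. sgn (poly (f1*f0) x) = t"
    using top_sign[OF p0] by (auto simp: eventually_at_top_linorder t_def p_def)
  have eb: "\<forall>\<^sub>F x in at_bot. sgn (poly (f1*f0) x) = b"
    using bot_sign[OF p0] by (auto simp: eventually_at_bot_linorder b_def t_def n_def p_def)
  have T1: "((\<forall>\<^sub>F x in at_top. ratfun f1 f0 x < 0) \<longleftrightarrow> t = -1) \<and> ((\<forall>\<^sub>F x in at_top. ratfun f1 f0 x > 0) \<longleftrightarrow> t = 1)"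
    using ratfun_sgn[OF et t] t by (intro sign_filter[OF trivial_limit_at_top_linorder]) auto
  have T2: "((\<forall>\<^sub>F x in at_top. ratfun (-f0) f1 x < 0) \<longleftrightarrow> -t = -1) \<and> ((\<forall>\<^sub>F x in at_top. ratfun (-f0) f1 x > 0) \<longleftrightarrow> -t = 1)"
    using ratfun_sgn[OF et t] t by (intro sign_filter[OF trivial_limit_at_top_linorder]) auto
  have B1: "((\<forall>\<^sub>F x in at_bot. ratfun f1 f0 x < 0) \<longleftrightarrow> b = -1) \<and> ((\<forall>\<^sub>F x in at_bot. ratfun f1 f0 x > 0) \<longleftrightarrow> b = 1)"
    using ratfun_sgn[OF eb b] b by (intro sign_filter[OF trivial_limit_at_bot_linorder]) auto
  have B2: "((\<forall>\<^sub>F x in at_bot. ratfun (-f0) f1 x < 0) \<longleftrightarrow> -b = -1) \<and> ((\<forall>\<^sub>F x in at_bot. ratfun (-f0) f1 x > 0) \<longleftrightarrow> -b = 1)"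
    using ratfun_sgn[OF eb b] b by (intro sign_filter[OF trivial_limit_at_bot_linorder]) auto
  define k where "k = int (degree f1) - int (degree f0)"
  have par: "odd k \<longleftrightarrow> odd n" unfolding k_def n by (simp add: even_diff)
  have I1: "ind_inf f1 f0 = (if k > 0 \<and> odd k then (if t = -1 \<and> b = 1 then 1 else if t = 1 \<and> b = -1 then -1 else 0) else 0)"
    unfolding ind_inf_def Let_def k_def[symmetric] using T1 B1 by simp
  have I2: "ind_inf (-f0) f1 = (if -k > 0 \<and> odd (-k) then (if -t = -1 \<and> -b = 1 then 1 else if -t = 1 \<and> -b = -1 then -1 else 0) else 0)"
    unfolding ind_inf_def Let_def using T2 B2 by (simp add: k_def)
  have goal: "?thesis = (real_of_int (ind_inf f1 f0) - real_of_int (ind_inf (-f0) f1) = (b - t)/2)"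
    by (simp add: b_def t_def n_def p_def)
  have "real_of_int (ind_inf f1 f0) - real_of_int (ind_inf (-f0) f1) = (b - t)/2"
  proof (cases "odd n")
    case True
    then have "b = - t" by (simp add: b_def)
    moreover have "k \<noteq> 0" using True par by auto
    ultimately show ?thesis using t I1 I2 True par
      by auto
  next
    case False
    then have "b = t" by (simp add: b_def)
    then show ?thesis using t I1 I2 False par
      by auto
  qed
  then show ?thesis using goal by simp
qed

theorem lemma55:
  fixes f1 f0 :: "real poly"
  assumes "f0 \<noteq> 0" and "f1 \<noteq> 0"
  shows "ind_PR (- f0) f1 = ind_PR f1 f0"
proof -
  define p where "p = f1 * f0"
  have p0: "p \<noteq> 0" using assms by (simp add: p_def)
  define Z where "Z = {w. poly p w = 0}"
  have finZ: "finite Z" using poly_roots_finite[OF p0] by (simp add: Z_def)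
  have s1: "ind_real f1 f0 = (\<Sum>w\<in>Z. jump_at f1 f0 w)"
    unfolding ind_real_def
  proof (rule sum.mono_neutral_left[OF finZ])
    show "{w. poly f0 w = 0} \<subseteq> Z" by (auto simp: Z_def p_def)
    show "\<forall>i\<in>Z - {w. poly f0 w = 0}. jump_at f1 f0 i = 0"
      by (auto simp: jump_at_def pole_order_def order_0I)
  qed
  have s2: "ind_real (-f0) f1 = (\<Sum>w\<in>Z. jump_at (-f0) f1 w)"
    unfolding ind_real_def
  proof (rule sum.mono_neutral_left[OF finZ])
    show "{w. poly f1 w = 0} \<subseteq> Z" by (auto simp: Z_def p_def)
    show "\<forall>i\<in>Z - {w. poly f1 w = 0}. jump_at (-f0) f1 i = 0"
      by (auto simp: jump_at_def pole_order_def order_0I)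
  qed
  have "real_of_int (ind_real f1 f0) - real_of_int (ind_real (-f0) f1)
        = (\<Sum>w\<in>Z. real_of_int (jump_at f1 f0 w) - real_of_int (jump_at (-f0) f1 w))"
    by (simp add: s1 s2 sum_subtractf)
  also have "\<dots> = (\<Sum>w\<in>Z. (sR p w - sL p w) / 2)"
    using jump_diff[OF assms] unfolding p_def by (intro sum.cong) auto
  also have "\<dots> = (\<Sum>w\<in>Z. sR p w - sL p w) / 2"
    by (simp add: sum_divide_distrib)
  finally have real_part: "real_of_int (ind_real f1 f0) - real_of_int (ind_real (-f0) f1)
        = (\<Sum>w\<in>Z. sR p w - sL p w) / 2" .
  obtain Mt where Mt: "\<forall>x\<ge>Mt. sgn (poly p x) = sgn (lead_coeff p)" using top_sign[OF p0] by auto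
  obtain Mb where Mb: "\<forall>x\<le>Mb. sgn (poly p x) = (-1)^degree p * sgn (lead_coeff p)"
    using bot_sign[OF p0] by auto
  define b where "b = max Mt (Max (insert 0 Z)) + 1"
  define a where "a = min Mb (Min (insert 0 Z)) - 1"
  have Zb: "\<And>w. w \<in> Z \<Longrightarrow> w < b"
  proof -
    fix w assume "w \<in> Z"
    then have "w \<le> Max (insert 0 Z)" using finZ by simp
    then show "w < b" by (simp add: b_def)
  qed
  have Za: "\<And>w. w \<in> Z \<Longrightarrow> a < w"
  proof -
    fix w assume "w \<in> Z"
    then have "Min (insert 0 Z) \<le> w" using finZ by simp
    then show "a < w" by (simp add: a_def)
  qed
  have ab: "a < b"
  proof -
    have "Min (insert 0 Z) \<le> 0" "0 \<le> Max (insert 0 Z)" using finZ by auto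
    then show ?thesis by (simp add: a_def b_def)
  qed
  have pa: "poly p a \<noteq> 0" using Za[of a] by (auto simp: Z_def)
  have pb: "poly p b \<noteq> 0" using Zb[of b] by (auto simp: Z_def)
  have sb: "sgn (poly p b) = sgn (lead_coeff p)" using Mt by (simp add: b_def)
  have sa: "sgn (poly p a) = (-1)^degree p * sgn (lead_coeff p)" using Mb by (simp add: a_def)
  have ZZ: "{w. poly p w = 0 \<and> a < w \<and> w < b} = Z" using Za Zb by (auto simp: Z_def)
  have tel: "(\<Sum>w\<in>Z. sR p w - sL p w) = sgn (lead_coeff p) - (-1)^degree p * sgn (lead_coeff p)"
    using telescope[OF p0 ab pa pb] by (simp add: ZZ sa sb)
  have "real_of_int (ind_PR f1 f0) - real_of_int (ind_PR (-f0) f1) = 0"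
    using real_part tel inf_diff[OF assms] by (simp add: ind_PR_def p_def algebra_simps)
  then show ?thesis by simp
qed

end
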